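(* For every positive integer $k$, the $k\times k$ grid graph $R_k$ satisfies $\tau(R_k)=\nu(R_k)=k$.
   Context: $R_k$ is the planar grid graph with vertex set $\{1,\dots,k\}^2$ in which $(i,j)$ and $(i',j')$ are adjacent iff $|i-i'|+|j-j'|=1$. Thicket of $G=(V,E)$: a finite collection $\mathcal H$ of nonempty subsets of $V$ each inducing a connected subgraph and pairwise intersecting; $\tau(\mathcal H)$ is the minimum size of a set meeting every member, and the thicket number $\tau(G)$ is the maximum of $\tau(\mathcal H)$ over all thickets. Vine decomposition: a tree $T$ with labels $V_t\subseteq V$ such that for each vertex $v$ the set $T_v=\{t:v\in V_t\}$ is nonempty and connected in $T$, and for each edge $uv$, $T_u$ and $T_v$ share a node or contain nodes adjacent in $T$; width $\max_t|V_t|$; vinewidth $\nu(G)$ is the minimum width. *)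

theory Defs
  imports Main
begin

(* A graph is given by a vertex set V and a (symmetric, irreflexive) adjacency predicate E. *)

definition connected_in :: "('a \<Rightarrow> 'a \<Rightarrow> bool) \<Rightarrow> 'a set \<Rightarrow> bool" where
  "connected_in E X \<longleftrightarrow> X \<noteq> {} \<and>
     (\<forall>x\<in>X. \<forall>y\<in>X. (\<lambda>a b. a \<in> X \<and> b \<in> X \<and> E a b)\<^sup>*\<^sup>* x y)"

definition thicket :: "'a set \<Rightarrow> ('a \<Rightarrow> 'a \<Rightarrow> bool) \<Rightarrow> 'a set set \<Rightarrow> bool" where
  "thicket V E H \<longleftrightarrow> finite H \<and>
     (\<forall>X\<in>H. X \<subseteq> V \<and> connected_in E X) \<and>
     (\<forall>X\<in>H. \<forall>Y\<in>H. X \<inter> Y \<noteq> {})"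

definition hitting_number :: "'a set \<Rightarrow> 'a set set \<Rightarrow> nat" where
  "hitting_number V H = Inf {card S | S. S \<subseteq> V \<and> (\<forall>X\<in>H. S \<inter> X \<noteq> {})}"

definition thicket_number :: "'a set \<Rightarrow> ('a \<Rightarrow> 'a \<Rightarrow> bool) \<Rightarrow> nat" where
  "thicket_number V E = Max {hitting_number V H | H. thicket V E H}"

definition is_tree :: "'t set \<Rightarrow> ('t \<Rightarrow> 't \<Rightarrow> bool) \<Rightarrow> bool" where
  "is_tree N A \<longleftrightarrow> finite N \<and>
     (\<forall>s t. A s t \<longrightarrow> s \<in> N \<and> t \<in> N \<and> s \<noteq> t \<and> A t s) \<and>
     connected_in A N \<and>
     (\<forall>s t. A s t \<longrightarrow> \<not> connected_in (\<lambda>a b. A a b \<and> {a, b} \<noteq> {s, t}) N)"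

definition vine_decomposition ::
  "'a set \<Rightarrow> ('a \<Rightarrow> 'a \<Rightarrow> bool) \<Rightarrow> 't set \<Rightarrow> ('t \<Rightarrow> 't \<Rightarrow> bool) \<Rightarrow> ('t \<Rightarrow> 'a set) \<Rightarrow> bool" where
  "vine_decomposition V E N A L \<longleftrightarrow> is_tree N A \<and>
     (\<forall>t\<in>N. L t \<subseteq> V) \<and>
     (\<forall>v\<in>V. connected_in A {t\<in>N. v \<in> L t}) \<and>
     (\<forall>u\<in>V. \<forall>v\<in>V. E u v \<longrightarrow>
        ({t\<in>N. u \<in> L t} \<inter> {t\<in>N. v \<in> L t} \<noteq> {} \<or>
         (\<exists>s\<in>{t\<in>N. u \<in> L t}. \<exists>t\<in>{t\<in>N. v \<in> L t}. A s t)))"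

definition width :: "'t set \<Rightarrow> ('t \<Rightarrow> 'a set) \<Rightarrow> nat" where
  "width N L = Max ((\<lambda>t. card (L t)) ` N)"

(* vinewidth: minimum width over all vine decompositions (tree nodes taken to be naturals,
   which is no loss of generality since trees are finite) *)
definition vinewidth :: "'a set \<Rightarrow> ('a \<Rightarrow> 'a \<Rightarrow> bool) \<Rightarrow> nat" where
  "vinewidth V E = Inf {width N L | (N :: nat set) A L. vine_decomposition V E N A L}"

definition grid_V :: "nat \<Rightarrow> (nat \<times> nat) set" where
  "grid_V k = {1..k} \<times> {1..k}"

definition grid_E :: "nat \<times> nat \<Rightarrow> nat \<times> nat \<Rightarrow> bool" where
  "grid_E p q \<longleftrightarrow> \<bar>int (fst p) - int (fst q)\<bar> + \<bar>int (snd p) - int (snd q)\<bar> = 1"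

end

theory Submission
  imports Defs
begin


lemma rtranclp_sym:
  assumes "\<And>a b. R a b \<Longrightarrow> R b a" and "R\<^sup>*\<^sup>* x y"
  shows "R\<^sup>*\<^sup>* y x"
  using assms(2)
proof (induction rule: rtranclp_induct)
  case base then show ?case by simp
next
  case (step y z)
  then show ?case using assms(1) by (meson converse_rtranclp_into_rtranclp)
qed

definition forest_like :: "'t set \<Rightarrow> ('t \<Rightarrow> 't \<Rightarrow> bool) \<Rightarrow> bool" where
 "forest_like N A \<longleftrightarrow> finite N \<and> (\<forall>s t. A s t \<longrightarrow> A t s) \<and> connected_in A N \<and>
   (\<forall>s t. s\<in>N \<longrightarrow> t\<in>N \<longrightarrow> A s t \<longrightarrow> \<not> connected_in (\<lambda>a b. A a b \<and> {a,b} \<noteq> {s,t}) N)"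

lemma retract_meet:
  assumes cross: "\<And>a b. a\<in>P \<Longrightarrow> b\<in>N \<Longrightarrow> b\<notin>P \<Longrightarrow> A a b \<or> A b a \<Longrightarrow> a = c \<and> b = d"
    and XN: "X \<subseteq> N" and conn: "connected_in A X" and XP: "X \<inter> P \<noteq> {}" and nXP: "\<not> X \<subseteq> P"
  shows "c \<in> X \<and> d \<in> X"
proof -
  obtain x where x: "x \<in> X" "x \<in> P" using XP by blast
  obtain y where y: "y \<in> X" "y \<notin> P" using nXP by blast
  have r: "(\<lambda>a b. a\<in>X \<and> b\<in>X \<and> A a b)\<^sup>*\<^sup>* x y" using conn x y unfolding connected_in_def by blast
  have "y \<notin> P \<Longrightarrow> c \<in> X \<and> d \<in> X" using r
  proof (induction rule: rtranclp_induct)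
    case base then show ?case using x by simp
  next
    case (step y z)
    show ?case
    proof (cases "y \<in> P")
      case True
      then show ?thesis using cross[of y z] step XN by blast
    next
      case False then show ?thesis using step by blast
    qed
  qed
  then show ?thesis using y by blast
qed

lemma retract_conn:
  assumes cross: "\<And>a b. a\<in>P \<Longrightarrow> b\<in>N \<Longrightarrow> b\<notin>P \<Longrightarrow> A a b \<or> A b a \<Longrightarrow> a = c \<and> b = d"
    and XN: "X \<subseteq> N" and conn: "connected_in A X" and XP: "X \<inter> P \<noteq> {}"
  shows "connected_in A (X \<inter> P)"
proof -
  define g where "g v = (if v \<in> P then v else c)" for v
  define RP where "RP = (\<lambda>a b. a\<in>X\<inter>P \<and> b\<in>X\<inter>P \<and> A a b)"
  have main: "RP\<^sup>*\<^sup>* (g x) (g y)" if r: "(\<lambda>a b. a\<in>X \<and> b\<in>X \<and> A a b)\<^sup>*\<^sup>* x y" for x y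
    using r
  proof (induction rule: rtranclp_induct)
    case base then show ?case by simp
  next
    case (step y z)
    have "RP\<^sup>*\<^sup>* (g y) (g z)"
    proof (cases "y \<in> P"; cases "z \<in> P")
      assume "y \<in> P" "z \<in> P" then show ?thesis using step(2) unfolding RP_def g_def by auto
    next
      assume "y \<in> P" "z \<notin> P" then show ?thesis using step(2) cross[of y z] XN unfolding g_def by auto
    next
      assume "y \<notin> P" "z \<in> P" then show ?thesis using step(2) cross[of z y] XN unfolding g_def by auto
    next
      assume "y \<notin> P" "z \<notin> P" then show ?thesis unfolding g_def by auto
    qed
    then show ?case using step(3) by simp
  qed
  show ?thesis unfolding connected_in_def
  proof (intro conjI ballI)
    show "X \<inter> P \<noteq> {}" by fact
  next
    fix x y assume "x \<in> X \<inter> P" "y \<in> X \<inter> P"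
    then have "(\<lambda>a b. a\<in>X \<and> b\<in>X \<and> A a b)\<^sup>*\<^sup>* x y" using conn unfolding connected_in_def by blast
    from main[OF this] show "(\<lambda>a b. a \<in> X \<inter> P \<and> b \<in> X \<inter> P \<and> A a b)\<^sup>*\<^sup>* x y"
      using \<open>x \<in> X \<inter> P\<close> \<open>y \<in> X \<inter> P\<close> unfolding RP_def g_def by simp
  qed
qed

lemma bridge_lift:
  assumes "P \<subseteq> N" "a \<in> P" "b \<in> P" "connected_in A N"
    "connected_in (\<lambda>u v. A u v \<and> {u,v} \<noteq> {a,b}) P"
  shows "connected_in (\<lambda>u v. A u v \<and> {u,v} \<noteq> {a,b}) N"
proof -
  have "(\<lambda>u v. u \<in> N \<and> v \<in> N \<and> A u v \<and> {u,v} \<noteq> {a,b})\<^sup>*\<^sup>* x y"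
    if r: "(\<lambda>u v. u \<in> N \<and> v \<in> N \<and> A u v)\<^sup>*\<^sup>* x y" for x y
    using r
  proof (induction rule: rtranclp_induct)
    case base then show ?case by simp
  next
    case (step y z)
    show ?case
    proof (cases "{y,z} = {a,b}")
      case True
      then have yz: "y \<in> P" "z \<in> P" using assms(2,3) by auto
      then have "(\<lambda>u v. u \<in> P \<and> v \<in> P \<and> A u v \<and> {u,v} \<noteq> {a,b})\<^sup>*\<^sup>* y z"
        using assms(5) unfolding connected_in_def by blast
      then have "(\<lambda>u v. u \<in> N \<and> v \<in> N \<and> A u v \<and> {u,v} \<noteq> {a,b})\<^sup>*\<^sup>* y z"
        by (rule rtranclp_mono[THEN predicate2D, rotated]) (use assms(1) in auto)
      then show ?thesis using step(3) by simp
    next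
      case False
      then show ?thesis using step by (metis (mono_tags, lifting) rtranclp.rtrancl_into_rtrancl)
    qed
  qed
  then show ?thesis using assms(4) unfolding connected_in_def by blast
qed

lemma helly:
  assumes "forest_like N A" "\<And>X. X\<in>F \<Longrightarrow> X \<subseteq> N" "\<And>X. X\<in>F \<Longrightarrow> connected_in A X"
    "\<And>X Y. X\<in>F \<Longrightarrow> Y\<in>F \<Longrightarrow> X \<inter> Y \<noteq> {}"
  shows "\<exists>t\<in>N. \<forall>X\<in>F. t \<in> X"
  using assms
proof (induction "card N" arbitrary: N F rule: less_induct)
  case less
  have fin: "finite N" and sym: "\<And>s t. A s t \<Longrightarrow> A t s" and conn: "connected_in A N"
    and bridge: "\<And>s t. s\<in>N \<Longrightarrow> t\<in>N \<Longrightarrow> A s t \<Longrightarrow> \<not> connected_in (\<lambda>a b. A a b \<and> {a,b} \<noteq> {s,t}) N"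
    using less.prems(1) unfolding forest_like_def by auto
  show ?case
  proof (cases "\<exists>s t. s\<in>N \<and> t\<in>N \<and> A s t")
    case False
    have eq: "x = y" if "(\<lambda>a b. a\<in>N \<and> b\<in>N \<and> A a b)\<^sup>*\<^sup>* x y" for x y
      using that by (induction rule: rtranclp_induct) (use False in auto)
    obtain n where n: "n \<in> N" using conn unfolding connected_in_def by blast
    have "\<forall>X\<in>F. n \<in> X"
    proof
      fix X assume X: "X \<in> F"
      then obtain m where "m \<in> X" using less.prems(3) unfolding connected_in_def by blast
      moreover have "m \<in> N" using \<open>m \<in> X\<close> less.prems(2)[OF X] by blast
      ultimately show "n \<in> X" using eq conn n unfolding connected_in_def by metis
    qed
    then show ?thesis using n by blast
  next
    case True
    then obtain s t where st: "s \<in> N" "t \<in> N" "A s t" by blast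
    define R' where "R' = (\<lambda>a b. a\<in>N \<and> b\<in>N \<and> A a b \<and> {a,b} \<noteq> {s,t})"
    define P where "P = {v\<in>N. R'\<^sup>*\<^sup>* s v}"
    have R'sym: "R' a b \<Longrightarrow> R' b a" for a b unfolding R'_def using sym by (auto simp: insert_commute)
    have tP: "t \<notin> P"
    proof
      assume "t \<in> P"
      then have st': "R'\<^sup>*\<^sup>* s t" unfolding P_def by simp
      have ts': "R'\<^sup>*\<^sup>* t s" using rtranclp_sym[OF R'sym st'] .
      have "R'\<^sup>*\<^sup>* x y" if "(\<lambda>a b. a\<in>N \<and> b\<in>N \<and> A a b)\<^sup>*\<^sup>* x y" for x y
        using that
      proof (induction rule: rtranclp_induct)
        case base then show ?case by simp
      next
        case (step y z)
        have "R'\<^sup>*\<^sup>* y z"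
        proof (cases "{y,z} = {s,t}")
          case True
          then have "(y = s \<and> z = t) \<or> (y = t \<and> z = s)" by (auto simp: doubleton_eq_iff)
          then show ?thesis using st' ts' by blast
        next
          case False then show ?thesis using step(2) unfolding R'_def by auto
        qed
        then show ?case using step(3) by simp
      qed
      then have "connected_in (\<lambda>a b. A a b \<and> {a,b} \<noteq> {s,t}) N"
        using conn unfolding connected_in_def R'_def by simp
      then show False using bridge st by blast
    qed
    have sP: "s \<in> P" unfolding P_def using st by simp
    have PN: "P \<subseteq> N" unfolding P_def by blast
    have crossP: "a = s \<and> b = t" if "a\<in>P" "b\<in>N" "b\<notin>P" "A a b \<or> A b a" for a b
    proof -
      have ab: "A a b" using that(4) sym by blast
      have "{a,b} = {s,t}"
      proof (rule ccontr)
        assume "{a,b} \<noteq> {s,t}"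
        then have "R' a b" unfolding R'_def using ab that PN by auto
        then have "b \<in> P" using that(1,2) unfolding P_def by auto
        then show False using that(3) by blast
      qed
      then have "(a = s \<and> b = t) \<or> (a = t \<and> b = s)" by (auto simp: doubleton_eq_iff)
      then show ?thesis using that(1) tP by blast
    qed
    have crossQ: "a = t \<and> b = s" if "a\<in>N-P" "b\<in>N" "b\<notin>N-P" "A a b \<or> A b a" for a b
      using crossP[of b a] that by blast
    have sub: "\<exists>t\<in>N. \<forall>X\<in>F. t \<in> X"
      if P'N: "P' \<subseteq> N" and cP: "c \<in> P'" and dN: "d \<in> N" and dP: "d \<notin> P'"
        and cross: "\<And>a b. a\<in>P' \<Longrightarrow> b\<in>N \<Longrightarrow> b\<notin>P' \<Longrightarrow> A a b \<or> A b a \<Longrightarrow> a = c \<and> b = d"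
        and X0: "X0 \<in> F" "X0 \<subseteq> P'"
      for P' c d X0
    proof -
      have card: "card P' < card N" proof (rule psubset_card_mono)
        show "finite N" by fact
        show "P' \<subset> N" using P'N dN dP by blast
      qed
      have fP': "forest_like P' A"
        unfolding forest_like_def
      proof (intro conjI allI impI)
        show "finite P'" using fin P'N finite_subset by blast
        show "A x y \<Longrightarrow> A y x" for x y using sym by blast
        have ne: "N \<inter> P' \<noteq> {}" using cP P'N by blast
        have "connected_in A (N \<inter> P')" by (rule retract_conn[OF cross order_refl conn ne])
        then show "connected_in A P'" using P'N by (simp add: Int_absorb1)
        show "\<not> connected_in (\<lambda>a b. A a b \<and> {a, b} \<noteq> {x, y}) P'" if "x \<in> P'" "y \<in> P'" "A x y" for x y
        proof
          assume "connected_in (\<lambda>a b. A a b \<and> {a, b} \<noteq> {x, y}) P'"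
          then have "connected_in (\<lambda>a b. A a b \<and> {a, b} \<noteq> {x, y}) N" by (rule bridge_lift[OF P'N that(1,2) conn])
          then show False using bridge[of x y] that P'N by blast
        qed
      qed
      define F' where "F' = (\<lambda>X. X \<inter> P') ` F"
      have meet: "X \<inter> P' \<noteq> {}" if "X \<in> F" for X using less.prems(4)[OF that X0(1)] X0(2) by blast
      have cin: "c \<in> X" if "X \<in> F" "\<not> X \<subseteq> P'" for X
        using retract_meet[OF cross less.prems(2)[OF that(1)] less.prems(3)[OF that(1)] meet[OF that(1)] that(2)] by blast
      have "\<exists>u\<in>P'. \<forall>X\<in>F'. u \<in> X"
      proof (rule less.hyps[OF card fP'])
        show "X \<subseteq> P'" if "X \<in> F'" for X using that unfolding F'_def by blast
        show "connected_in A X" if "X \<in> F'" for X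
          using that retract_conn[OF cross less.prems(2) less.prems(3) meet] unfolding F'_def by auto
        show "X \<inter> Y \<noteq> {}" if XF: "X \<in> F'" "Y \<in> F'" for X Y
        proof -
          obtain X1 Y1 where XY: "X1 \<in> F" "Y1 \<in> F" "X = X1 \<inter> P'" "Y = Y1 \<inter> P'"
            using XF unfolding F'_def by blast
          show ?thesis
          proof (cases "X1 \<subseteq> P' \<or> Y1 \<subseteq> P'")
            case True
            then show ?thesis using less.prems(4)[OF XY(1,2)] unfolding XY(3,4) by blast
          next
            case False
            then have "c \<in> X1" "c \<in> Y1" using cin[OF XY(1)] cin[OF XY(2)] by auto
            then show ?thesis using cP unfolding XY(3,4) by blast
          qed
        qed
      qed
      then obtain u where "u \<in> P'" "\<forall>X\<in>F'. u \<in> X" by blast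
      then show ?thesis using P'N unfolding F'_def by blast
    qed
    show ?thesis
    proof (cases "\<exists>X0\<in>F. X0 \<subseteq> P")
      case True
      then obtain X0 where X0: "X0 \<in> F" "X0 \<subseteq> P" by blast
      show ?thesis
      proof (rule sub[of P s t X0])
        show "\<And>a b. a \<in> P \<Longrightarrow> b \<in> N \<Longrightarrow> b \<notin> P \<Longrightarrow> A a b \<or> A b a \<Longrightarrow> a = s \<and> b = t" by (rule crossP)
      qed (use PN sP st tP X0 in auto)
    next
      case F1: False
      show ?thesis
      proof (cases "\<exists>X0\<in>F. X0 \<subseteq> N - P")
        case True
        then obtain X0 where X0: "X0 \<in> F" "X0 \<subseteq> N - P" by blast
        show ?thesis
        proof (rule sub[of "N - P" t s X0])
          show "\<And>a b. a \<in> N - P \<Longrightarrow> b \<in> N \<Longrightarrow> b \<notin> N - P \<Longrightarrow> A a b \<or> A b a \<Longrightarrow> a = t \<and> b = s" by (rule crossQ)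
        qed (use PN sP st tP X0 in auto)
      next
        case False
        have "s \<in> X" if "X \<in> F" for X
        proof -
          have "X \<inter> P \<noteq> {}" using False that less.prems(2)[OF that] by blast
          moreover have "\<not> X \<subseteq> P" using F1 that by blast
          ultimately show ?thesis using retract_meet[OF crossP less.prems(2)[OF that] less.prems(3)[OF that]] by blast
        qed
        then show ?thesis using st by blast
      qed
    qed
  qed
qed




lemma TX_conn:
  assumes vd: "vine_decomposition V E N A L" and XV: "X \<subseteq> V" and cX: "connected_in E X"
  shows "connected_in A {t\<in>N. L t \<inter> X \<noteq> {}}"
proof -
  define TX where "TX = {t\<in>N. L t \<inter> X \<noteq> {}}"
  define RT where "RT = (\<lambda>a b. a\<in>TX \<and> b\<in>TX \<and> A a b)"
  define T where "T v = {t\<in>N. v \<in> L t}" for v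
  have Tc: "connected_in A (T v)" if "v \<in> V" for v using vd that unfolding vine_decomposition_def T_def by blast
  have edge: "T u \<inter> T v \<noteq> {} \<or> (\<exists>s\<in>T u. \<exists>t\<in>T v. A s t)" if "u\<in>V" "v\<in>V" "E u v" for u v
    using vd that unfolding vine_decomposition_def T_def by blast
  have TsubX: "T v \<subseteq> TX" if "v \<in> X" for v using that unfolding T_def TX_def by blast
  have within: "RT\<^sup>*\<^sup>* x y" if "v \<in> X" "x \<in> T v" "y \<in> T v" for v x y
  proof -
    have "(\<lambda>a b. a \<in> T v \<and> b \<in> T v \<and> A a b)\<^sup>*\<^sup>* x y" using Tc[of v] that XV unfolding connected_in_def by blast
    then show ?thesis
      by (rule rtranclp_mono[THEN predicate2D, rotated]) (use TsubX[OF that(1)] in \<open>auto simp: RT_def\<close>)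
  qed
  have ne: "T v \<noteq> {}" if "v \<in> X" for v using Tc[of v] that XV unfolding connected_in_def by blast
  have path: "\<forall>t1\<in>T u. \<forall>t2\<in>T w. RT\<^sup>*\<^sup>* t1 t2"
    if r: "(\<lambda>a b. a\<in>X \<and> b\<in>X \<and> E a b)\<^sup>*\<^sup>* u w" and u: "u \<in> X" for u w
    using r
  proof (induction rule: rtranclp_induct)
    case base then show ?case using within[OF u] by blast
  next
    case (step w v)
    have wv: "w \<in> X" "v \<in> X" "E w v" using step(2) by auto
    show ?case
    proof (intro ballI)
      fix t1 t3 assume t1: "t1 \<in> T u" and t3: "t3 \<in> T v"
      from edge[of w v] wv XV
      consider (sh) s where "s \<in> T w" "s \<in> T v" | (ad) s s' where "s \<in> T w" "s' \<in> T v" "A s s'" by blast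
      then show "RT\<^sup>*\<^sup>* t1 t3"
      proof cases
        case sh
        have "RT\<^sup>*\<^sup>* t1 s" using step(3) t1 sh by blast
        moreover have "RT\<^sup>*\<^sup>* s t3" using within[OF wv(2) sh(2) t3] .
        ultimately show ?thesis by simp
      next
        case ad
        have "RT\<^sup>*\<^sup>* t1 s" using step(3) t1 ad by blast
        moreover have "RT s s'" unfolding RT_def using ad TsubX wv by blast
        moreover have "RT\<^sup>*\<^sup>* s' t3" using within[OF wv(2) ad(2) t3] .
        ultimately show ?thesis by simp
      qed
    qed
  qed
  have "connected_in A TX" unfolding connected_in_def
  proof (intro conjI ballI)
    obtain v where "v \<in> X" using cX unfolding connected_in_def by blast
    then show "TX \<noteq> {}" using ne TsubX by blast
  next
    fix x y assume x: "x \<in> TX" and y: "y \<in> TX"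
    then obtain u w where "u \<in> X" "w \<in> X" "x \<in> T u" "y \<in> T w" unfolding TX_def T_def by blast
    moreover then have "(\<lambda>a b. a\<in>X \<and> b\<in>X \<and> E a b)\<^sup>*\<^sup>* u w" using cX unfolding connected_in_def by blast
    ultimately show "(\<lambda>a b. a \<in> TX \<and> b \<in> TX \<and> A a b)\<^sup>*\<^sup>* x y" using path unfolding RT_def by blast
  qed
  then show ?thesis unfolding TX_def .
qed

lemma bag_hits:
  assumes vd: "vine_decomposition V E N A L" and th: "thicket V E H"
  shows "\<exists>t\<in>N. \<forall>X\<in>H. L t \<inter> X \<noteq> {}"
proof -
  have fl: "forest_like N A" using vd unfolding vine_decomposition_def is_tree_def forest_like_def by blast
  define F where "F = (\<lambda>X. {t\<in>N. L t \<inter> X \<noteq> {}}) ` H"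
  have "\<exists>t\<in>N. \<forall>Y\<in>F. t \<in> Y"
  proof (rule helly[OF fl])
    show "Y \<subseteq> N" if "Y \<in> F" for Y using that unfolding F_def by blast
    show "connected_in A Y" if YF: "Y \<in> F" for Y
    proof -
      obtain X where X: "X \<in> H" "Y = {t\<in>N. L t \<inter> X \<noteq> {}}" using YF unfolding F_def by blast
      have "X \<subseteq> V" "connected_in E X" using th X(1) unfolding thicket_def by auto
      then show ?thesis using TX_conn[OF vd] X(2) by simp
    qed
    show "Y \<inter> Z \<noteq> {}" if YZ: "Y \<in> F" "Z \<in> F" for Y Z
    proof -
      obtain X1 X2 where X: "X1 \<in> H" "X2 \<in> H" "Y = {t\<in>N. L t \<inter> X1 \<noteq> {}}" "Z = {t\<in>N. L t \<inter> X2 \<noteq> {}}"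
        using YZ unfolding F_def by blast
      obtain v where v: "v \<in> X1" "v \<in> X2" using th X unfolding thicket_def by blast
      have "v \<in> V" using th X v unfolding thicket_def by blast
      then have "connected_in A {t\<in>N. v \<in> L t}" using vd unfolding vine_decomposition_def by blast
      then obtain t where "t \<in> N" "v \<in> L t" unfolding connected_in_def by blast
      then show ?thesis using X v by blast
    qed
  qed
  then obtain t where "t \<in> N" "\<forall>Y\<in>F. t \<in> Y" by blast
  then show ?thesis unfolding F_def by auto
qed




lemma grid_E_sym: "grid_E a b \<Longrightarrow> grid_E b a"
  unfolding grid_E_def by linarith

definition cross :: "nat \<Rightarrow> nat \<Rightarrow> nat \<Rightarrow> (nat \<times> nat) set" where
  "cross k i j = ({i} \<times> {1..k}) \<union> ({1..k} \<times> {j})"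

lemma row_reach:
  assumes "{i} \<times> {1..k} \<subseteq> X" "1 \<le> a" "a \<le> b" "b \<le> k"
  shows "(\<lambda>p q. p \<in> X \<and> q \<in> X \<and> grid_E p q)\<^sup>*\<^sup>* (i,a) (i,b)"
  using assms(3,4)
proof (induction b)
  case 0 then show ?case by simp
next
  case (Suc b)
  show ?case
  proof (cases "a = Suc b")
    case True then show ?thesis by simp
  next
    case False
    then have "a \<le> b" using Suc by simp
    then have IH: "(\<lambda>p q. p \<in> X \<and> q \<in> X \<and> grid_E p q)\<^sup>*\<^sup>* (i,a) (i,b)" using Suc by simp
    have "(i,b) \<in> X" "(i, Suc b) \<in> X" using assms(1,2) Suc.prems \<open>a \<le> b\<close> by auto
    moreover have "grid_E (i,b) (i,Suc b)" unfolding grid_E_def by simp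
    ultimately show ?thesis using IH by (simp add: rtranclp.rtrancl_into_rtrancl)
  qed
qed

lemma col_reach:
  assumes "{1..k} \<times> {j} \<subseteq> X" "1 \<le> a" "a \<le> b" "b \<le> k"
  shows "(\<lambda>p q. p \<in> X \<and> q \<in> X \<and> grid_E p q)\<^sup>*\<^sup>* (a,j) (b,j)"
  using assms(3,4)
proof (induction b)
  case 0 then show ?case by simp
next
  case (Suc b)
  show ?case
  proof (cases "a = Suc b")
    case True then show ?thesis by simp
  next
    case False
    then have "a \<le> b" using Suc by simp
    then have IH: "(\<lambda>p q. p \<in> X \<and> q \<in> X \<and> grid_E p q)\<^sup>*\<^sup>* (a,j) (b,j)" using Suc by simp
    have "(b,j) \<in> X" "(Suc b, j) \<in> X" using assms(1,2) Suc.prems \<open>a \<le> b\<close> by auto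
    moreover have "grid_E (b,j) (Suc b,j)" unfolding grid_E_def by simp
    ultimately show ?thesis using IH by (simp add: rtranclp.rtrancl_into_rtrancl)
  qed
qed

lemma cross_conn:
  assumes "i \<in> {1..k}" "j \<in> {1..k}"
  shows "connected_in grid_E (cross k i j)"
proof -
  let ?X = "cross k i j"
  define R where "R = (\<lambda>p q. p \<in> ?X \<and> q \<in> ?X \<and> grid_E p q)"
  have Rs: "R a b \<Longrightarrow> R b a" for a b using grid_E_sym unfolding R_def by blast
  have rowX: "{i} \<times> {1..k} \<subseteq> ?X" and colX: "{1..k} \<times> {j} \<subseteq> ?X" unfolding cross_def by auto
  have toc: "R\<^sup>*\<^sup>* p (i,j)" if "p \<in> ?X" for p
  proof -
    obtain a b where p: "p = (a,b)" by fastforce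
    from that consider "a = i" "b \<in> {1..k}" | "b = j" "a \<in> {1..k}" unfolding cross_def p by auto
    then show ?thesis
    proof cases
      case 1
      show ?thesis
      proof (cases "b \<le> j")
        case True then show ?thesis using row_reach[OF rowX, of b j] 1 assms p unfolding R_def by auto
      next
        case False
        then have "R\<^sup>*\<^sup>* (i,j) (i,b)" using row_reach[OF rowX, of j b] 1 assms unfolding R_def by auto
        then show ?thesis using rtranclp_sym[of R, OF Rs] 1 p by blast
      qed
    next
      case 2
      show ?thesis
      proof (cases "a \<le> i")
        case True then show ?thesis using col_reach[OF colX, of a i] 2 assms p unfolding R_def by auto
      next
        case False
        then have "R\<^sup>*\<^sup>* (i,j) (a,j)" using col_reach[OF colX, of i a] 2 assms unfolding R_def by auto
        then show ?thesis using rtranclp_sym[of R, OF Rs] 2 p by blast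
      qed
    qed
  qed
  show ?thesis unfolding connected_in_def
  proof (intro conjI ballI)
    show "?X \<noteq> {}" using assms unfolding cross_def by auto
  next
    fix x y assume "x \<in> ?X" "y \<in> ?X"
    then have "R\<^sup>*\<^sup>* x (i,j)" "R\<^sup>*\<^sup>* (i,j) y" using toc rtranclp_sym[of R, OF Rs] by blast+
    then show "(\<lambda>p q. p \<in> ?X \<and> q \<in> ?X \<and> grid_E p q)\<^sup>*\<^sup>* x y" unfolding R_def by simp
  qed
qed

definition crosses :: "nat \<Rightarrow> (nat \<times> nat) set set" where
  "crosses k = {cross k i j | i j. i \<in> {1..k} \<and> j \<in> {1..k}}"

lemma crosses_thicket: "thicket (grid_V k) grid_E (crosses k)"
  unfolding thicket_def
proof (intro conjI ballI)
  have "crosses k = (\<lambda>(i,j). cross k i j) ` ({1..k} \<times> {1..k})" unfolding crosses_def by force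
  then show "finite (crosses k)" by simp
next
  fix X assume "X \<in> crosses k"
  then obtain i j where "i \<in> {1..k}" "j \<in> {1..k}" "X = cross k i j" unfolding crosses_def by blast
  then show "X \<subseteq> grid_V k" unfolding grid_V_def cross_def by auto
next
  fix X assume "X \<in> crosses k"
  then obtain i j where "i \<in> {1..k}" "j \<in> {1..k}" "X = cross k i j" unfolding crosses_def by blast
  then show "connected_in grid_E X" using cross_conn by simp
next
  fix X Y assume "X \<in> crosses k" "Y \<in> crosses k"
  then obtain i j i' j' where "i \<in> {1..k}" "j \<in> {1..k}" "X = cross k i j"
    "i' \<in> {1..k}" "j' \<in> {1..k}" "Y = cross k i' j'" unfolding crosses_def by blast
  then have "(i,j') \<in> X \<inter> Y" unfolding cross_def by auto
  then show "X \<inter> Y \<noteq> {}" by blast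
qed

lemma hits_crosses:
  assumes "S \<subseteq> grid_V k" "\<And>X. X \<in> crosses k \<Longrightarrow> S \<inter> X \<noteq> {}"
  shows "k \<le> card S"
proof (rule ccontr)
  assume "\<not> k \<le> card S"
  then have lt: "card S < k" by simp
  have fS: "finite S" using assms(1) finite_subset unfolding grid_V_def by blast
  have "card (fst ` S) < card {1..k}" using card_image_le[OF fS, of fst] lt by simp
  then have "\<not> {1..k} \<subseteq> fst ` S" using card_mono[of "fst ` S" "{1..k}"] fS by auto
  then obtain i where i: "i \<in> {1..k}" "i \<notin> fst ` S" by blast
  have "card (snd ` S) < card {1..k}" using card_image_le[OF fS, of snd] lt by simp
  then have "\<not> {1..k} \<subseteq> snd ` S" using card_mono[of "snd ` S" "{1..k}"] fS by auto
  then obtain j where j: "j \<in> {1..k}" "j \<notin> snd ` S" by blast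
  have "cross k i j \<in> crosses k" using i j unfolding crosses_def by blast
  then have "S \<inter> cross k i j \<noteq> {}" by (rule assms(2))
  then obtain p where "p \<in> S" "p \<in> cross k i j" by blast
  then show False using i j unfolding cross_def by (auto simp: image_iff)
qed




definition PA :: "nat \<Rightarrow> nat \<Rightarrow> nat \<Rightarrow> bool" where
  "PA k s t \<longleftrightarrow> s \<in> {1..k} \<and> t \<in> {1..k} \<and> (s = Suc t \<or> t = Suc s)"

definition rowL :: "nat \<Rightarrow> nat \<Rightarrow> (nat \<times> nat) set" where
  "rowL k r = {r} \<times> {1..k}"

lemma path_reach:
  assumes "1 \<le> a" "a \<le> b" "b \<le> k"
  shows "(\<lambda>x y. x \<in> {1..k} \<and> y \<in> {1..k} \<and> PA k x y)\<^sup>*\<^sup>* a b"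
  using assms(2,3)
proof (induction b)
  case 0 then show ?case by simp
next
  case (Suc b)
  show ?case
  proof (cases "a = Suc b")
    case True then show ?thesis by simp
  next
    case False
    then have "a \<le> b" using Suc by simp
    then have IH: "(\<lambda>x y. x \<in> {1..k} \<and> y \<in> {1..k} \<and> PA k x y)\<^sup>*\<^sup>* a b" using Suc by simp
    have "PA k b (Suc b)" "b \<in> {1..k}" "Suc b \<in> {1..k}" using assms(1) Suc.prems \<open>a \<le> b\<close> unfolding PA_def by auto
    then show ?thesis using IH by (simp add: rtranclp.rtrancl_into_rtrancl)
  qed
qed

lemma path_conn:
  assumes "1 \<le> k"
  shows "connected_in (PA k) {1..k}"
proof -
  define R where "R = (\<lambda>x y. x \<in> {1..k} \<and> y \<in> {1..k} \<and> PA k x y)"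
  have Rs: "R a b \<Longrightarrow> R b a" for a b unfolding R_def PA_def by auto
  show ?thesis unfolding connected_in_def
  proof (intro conjI ballI)
    show "{1..k} \<noteq> {}" using assms by simp
  next
    fix x y assume xy: "x \<in> {1..k}" "y \<in> {1..k}"
    have "R\<^sup>*\<^sup>* x y"
    proof (cases "x \<le> y")
      case True then show ?thesis using path_reach[of x y k] xy unfolding R_def by auto
    next
      case False
      then have "R\<^sup>*\<^sup>* y x" using path_reach[of y x k] xy unfolding R_def by auto
      then show ?thesis using rtranclp_sym[of R, OF Rs] by blast
    qed
    then show "(\<lambda>a b. a \<in> {1..k} \<and> b \<in> {1..k} \<and> PA k a b)\<^sup>*\<^sup>* x y" unfolding R_def .
  qed
qed

lemma path_tree:
  assumes "1 \<le> k"
  shows "is_tree {1..k} (PA k)"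
  unfolding is_tree_def
proof (intro conjI allI impI)
  show "finite {1..k}" by simp
  show "connected_in (PA k) {1..k}" by (rule path_conn[OF assms])
next
  fix s t assume st: "PA k s t"
  then show "s \<in> {1..k}" "t \<in> {1..k}" "s \<noteq> t" "PA k t s" unfolding PA_def by auto
next
  fix s t assume st: "PA k s t"
  define m where "m = min s t"
  have mst: "{s,t} = {m, Suc m}" "m \<in> {1..k}" "Suc m \<in> {1..k}" using st unfolding PA_def m_def by auto
  define R where "R = (\<lambda>a b. a \<in> {1..k} \<and> b \<in> {1..k} \<and> PA k a b \<and> {a, b} \<noteq> {s, t})"
  have inv: "y \<le> m" if "R\<^sup>*\<^sup>* x y" "x \<le> m" for x y
    using that
  proof (induction rule: rtranclp_induct)
    case base then show ?case by simp
  next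
    case (step y z)
    then have "y \<le> m" by simp
    moreover have "PA k y z" "{y,z} \<noteq> {m, Suc m}" using step(2) mst unfolding R_def by auto
    ultimately show ?case unfolding PA_def by auto
  qed
  show "\<not> connected_in (\<lambda>a b. PA k a b \<and> {a, b} \<noteq> {s, t}) {1..k}"
  proof
    assume "connected_in (\<lambda>a b. PA k a b \<and> {a, b} \<noteq> {s, t}) {1..k}"
    then have "R\<^sup>*\<^sup>* m (Suc m)" using mst unfolding connected_in_def R_def by blast
    then show False using inv by fastforce
  qed
qed

lemma row_vd:
  assumes "1 \<le> k"
  shows "vine_decomposition (grid_V k) grid_E {1..k} (PA k) (rowL k)"
  unfolding vine_decomposition_def
proof (intro conjI ballI impI)
  show "is_tree {1..k} (PA k)" by (rule path_tree[OF assms])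
next
  fix t assume "t \<in> {1..k}"
  then show "rowL k t \<subseteq> grid_V k" unfolding rowL_def grid_V_def by auto
next
  fix v assume v: "v \<in> grid_V k"
  have "{t \<in> {1..k}. v \<in> rowL k t} = {fst v}" using v unfolding rowL_def grid_V_def by auto
  then show "connected_in (PA k) {t \<in> {1..k}. v \<in> rowL k t}" unfolding connected_in_def by simp
next
  fix u v assume uv: "u \<in> grid_V k" "v \<in> grid_V k" "grid_E u v"
  obtain a b c d where u: "u = (a,b)" and v: "v = (c,d)" by fastforce
  have r: "a \<in> {1..k}" "b \<in> {1..k}" "c \<in> {1..k}" "d \<in> {1..k}" using uv u v unfolding grid_V_def by auto
  have e: "\<bar>int a - int c\<bar> + \<bar>int b - int d\<bar> = 1" using uv(3) u v unfolding grid_E_def by simp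
  show "{t \<in> {1..k}. u \<in> rowL k t} \<inter> {t \<in> {1..k}. v \<in> rowL k t} \<noteq> {} \<or>
         (\<exists>s\<in>{t \<in> {1..k}. u \<in> rowL k t}. \<exists>t\<in>{t \<in> {1..k}. v \<in> rowL k t}. PA k s t)"
  proof (cases "a = c")
    case True
    then have "a \<in> {t \<in> {1..k}. u \<in> rowL k t} \<inter> {t \<in> {1..k}. v \<in> rowL k t}"
      using r u v unfolding rowL_def by auto
    then show ?thesis by blast
  next
    case False
    then have "a = Suc c \<or> c = Suc a" using e by linarith
    then have "PA k a c" using r unfolding PA_def by auto
    moreover have "a \<in> {t \<in> {1..k}. u \<in> rowL k t}" "c \<in> {t \<in> {1..k}. v \<in> rowL k t}"
      using r u v unfolding rowL_def by auto
    ultimately show ?thesis by blast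
  qed
qed

lemma row_width:
  assumes "1 \<le> k"
  shows "width {1..k} (rowL k) = k"
proof -
  have "(\<lambda>t. card (rowL k t)) ` {1..k} = {k}" using assms unfolding rowL_def by (auto simp: card_cartesian_product)
  then show ?thesis unfolding width_def by simp
qed

lemma hn_le:
  assumes "S \<subseteq> V" "\<And>X. X \<in> H \<Longrightarrow> S \<inter> X \<noteq> {}"
  shows "hitting_number V H \<le> card S"
  unfolding hitting_number_def by (rule cInf_lower) (use assms in auto)

theorem mainTheorem10:
  fixes k :: nat
  assumes "k \<ge> 1"
  shows "thicket_number (grid_V k) grid_E = k \<and> vinewidth (grid_V k) grid_E = k"
proof
  have upper: "hitting_number (grid_V k) H \<le> k" if th: "thicket (grid_V k) grid_E H" for H
  proof -
    obtain t where t: "t \<in> {1..k}" "\<forall>X\<in>H. rowL k t \<inter> X \<noteq> {}" using bag_hits[OF row_vd[OF assms] th] by blast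
    have "hitting_number (grid_V k) H \<le> card (rowL k t)"
      by (rule hn_le) (use t in \<open>auto simp: rowL_def grid_V_def\<close>)
    also have "card (rowL k t) = k" unfolding rowL_def by (simp add: card_cartesian_product)
    finally show ?thesis .
  qed
  have cross_hn: "hitting_number (grid_V k) (crosses k) = k"
  proof (rule antisym)
    show "hitting_number (grid_V k) (crosses k) \<le> k" by (rule upper[OF crosses_thicket])
    have ne: "{card S |S. S \<subseteq> grid_V k \<and> (\<forall>X\<in>crosses k. S \<inter> X \<noteq> {})} \<noteq> {}"
    proof -
      have "grid_V k \<inter> X \<noteq> {}" if "X \<in> crosses k" for X
      proof -
        have "X \<subseteq> grid_V k" "connected_in grid_E X" using crosses_thicket that unfolding thicket_def by auto
        then show ?thesis unfolding connected_in_def by blast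
      qed
      then have "card (grid_V k) \<in> {card S |S. S \<subseteq> grid_V k \<and> (\<forall>X\<in>crosses k. S \<inter> X \<noteq> {})}"
        by blast
      then show ?thesis by blast
    qed
    show "k \<le> hitting_number (grid_V k) (crosses k)"
      unfolding hitting_number_def
    proof (rule cInf_greatest[OF ne])
      fix x assume "x \<in> {card S |S. S \<subseteq> grid_V k \<and> (\<forall>X\<in>crosses k. S \<inter> X \<noteq> {})}"
      then obtain S where S: "x = card S" "S \<subseteq> grid_V k" "\<forall>X\<in>crosses k. S \<inter> X \<noteq> {}" by blast
      show "k \<le> x" unfolding S(1) by (rule hits_crosses[OF S(2)]) (use S(3) in blast)
    qed
  qed
  define T where "T = {hitting_number (grid_V k) H |H. thicket (grid_V k) grid_E H}"
  have "T \<subseteq> {..k}" unfolding T_def using upper by auto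
  then have fT: "finite T" by (rule finite_subset) simp
  have "hitting_number (grid_V k) (crosses k) \<in> T" unfolding T_def using crosses_thicket by blast
  then have kT: "k \<in> T" using cross_hn by simp
  show "thicket_number (grid_V k) grid_E = k"
    unfolding thicket_number_def T_def[symmetric]
    by (rule Max_eqI[OF fT]) (use \<open>T \<subseteq> {..k}\<close> kT in auto)
next
  define W where "W = {width N L |(N :: nat set) A L. vine_decomposition (grid_V k) grid_E N A L}"
  have "width {1..k} (rowL k) \<in> W" unfolding W_def using row_vd[OF assms] by blast
  then have kW: "k \<in> W" using row_width[OF assms] by simp
  have geW: "k \<le> w" if wW: "w \<in> W" for w
  proof -
    obtain N :: "nat set" and A L where vd: "vine_decomposition (grid_V k) grid_E N A L" and w: "w = width N L"
      using wW unfolding W_def by blast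
    obtain t where t: "t \<in> N" "\<forall>X\<in>crosses k. L t \<inter> X \<noteq> {}" using bag_hits[OF vd crosses_thicket] by blast
    have Lt: "L t \<subseteq> grid_V k" using vd t(1) unfolding vine_decomposition_def by blast
    have "k \<le> card (L t)" by (rule hits_crosses[OF Lt]) (use t in blast)
    also have "card (L t) \<le> width N L"
    proof -
      have "finite N" using vd unfolding vine_decomposition_def is_tree_def by blast
      then show ?thesis unfolding width_def using t(1) by (simp add: Max_ge)
    qed
    finally show ?thesis using w by simp
  qed
  show "vinewidth (grid_V k) grid_E = k"
    unfolding vinewidth_def W_def[symmetric]
  proof (rule antisym)
    show "Inf W \<le> k" by (rule cInf_lower[OF kW]) simp
    show "k \<le> Inf W" by (rule cInf_greatest) (use kW geW in auto)
  qed
qed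


end
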